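(* Let $A$ be an $N\times N$ $(0,1)$-matrix such that every row and every column contains at least $N-2$ ones. Then, for all $N\geq 400$, $\operatorname{perm}(A)>\frac{1}{7.5}N!$.
   Context: $\operatorname{perm}(A)=\sum_{\pi\in\Sigma_N}\prod_{i=1}^N a_{i\pi(i)}$ is the permanent. *)

theory Defs
  imports Complex_Main "HOL-Combinatorics.Permutations"
begin

definition permanent :: "nat \<Rightarrow> (nat \<Rightarrow> nat \<Rightarrow> real) \<Rightarrow> real" where
  "permanent N A = (\<Sum>\<pi>\<in>{\<pi>. \<pi> permutes {0..<N}}. \<Prod>i<N. A i (\<pi> i))"

end

theory Submission
  imports Defs
begin

definition HS :: "(nat\<Rightarrow>nat\<Rightarrow>real) \<Rightarrow> nat \<Rightarrow> (nat\<Rightarrow>nat) \<Rightarrow> nat set" where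
  "HS A n p = {i. i<n \<and> A i (p i) = 0}"

definition NN :: "(nat\<Rightarrow>nat\<Rightarrow>real) \<Rightarrow> nat \<Rightarrow> nat \<Rightarrow> nat" where
  "NN A n m = card {p. p permutes {0..<n} \<and> card (HS A n p) = m}"

lemma HS_sub: "HS A n p \<subseteq> {0..<n}" by (auto simp: HS_def)

lemma fin_perm: "finite {p. p permutes {0..<(n::nat)}}"
  by (rule finite_permutations) simp

lemma sum_hits:
  fixes f :: "nat \<Rightarrow> real"
  shows "(\<Sum>p\<in>{p. p permutes {0..<n}}. f (card (HS A n p))) = (\<Sum>m\<le>n. f m * real (NN A n m))"
proof -
  let ?P = "{p. p permutes {0..<n}}"
  have im: "(\<lambda>p. card (HS A n p)) ` ?P \<subseteq> {..n}"
  proof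
    fix x assume "x \<in> (\<lambda>p. card (HS A n p)) ` ?P"
    then obtain p where "x = card (HS A n p)" by auto
    moreover have "card (HS A n p) \<le> card {0..<n}" by (rule card_mono) (auto simp: HS_def)
    ultimately show "x \<in> {..n}" by simp
  qed
  have "(\<Sum>p\<in>?P. f (card (HS A n p))) = (\<Sum>m\<le>n. \<Sum>p\<in>{p \<in> ?P. card (HS A n p) = m}. f (card (HS A n p)))"
    by (rule sum.group[OF fin_perm _ im, symmetric]) simp
  also have "\<dots> = (\<Sum>m\<le>n. f m * real (NN A n m))"
    by (rule sum.cong) (auto simp: NN_def)
  finally show ?thesis .
qed

lemma card_fix:
  assumes "i < n" "j < n"
  shows "card {p. p permutes {0..<n} \<and> p i = j} = fact (n - 1)"
proof -
  let ?S = "{0..<n} - {i}"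
  have eq: "{p. p permutes {0..<n} \<and> p i = j} = (\<lambda>q. Transposition.transpose i j \<circ> q) ` {q. q permutes ?S}"
  proof (intro set_eqI iffI)
    fix p assume "p \<in> {p. p permutes {0..<n} \<and> p i = j}"
    then have p: "p permutes {0..<n}" "p i = j" by auto
    let ?q = "Transposition.transpose i j \<circ> p"
    have "?q permutes {0..<n}"
      by (rule permutes_compose[OF p(1) permutes_swap_id]) (use assms in auto)
    then have "?q permutes ?S"
      by (rule permutes_superset) (use p(2) in auto)
    moreover have "p = Transposition.transpose i j \<circ> ?q"
      by (simp add: comp_assoc[symmetric])
    ultimately show "p \<in> (\<lambda>q. Transposition.transpose i j \<circ> q) ` {q. q permutes ?S}" by blast
  next
    fix p assume "p \<in> (\<lambda>q. Transposition.transpose i j \<circ> q) ` {q. q permutes ?S}"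
    then obtain q where q: "q permutes ?S" and pq: "p = Transposition.transpose i j \<circ> q" by auto
    have q2: "q permutes {0..<n}" by (rule permutes_subset[OF q]) auto
    have "q i = i" using permutes_not_in[OF q] by simp
    then show "p \<in> {p. p permutes {0..<n} \<and> p i = j}"
      using permutes_compose[OF q2 permutes_swap_id, of i j] assms pq by auto
  qed
  have inj: "inj_on (\<lambda>q. Transposition.transpose i j \<circ> q) {q. q permutes ?S}"
    by (rule inj_onI) (metis comp_assoc transpose_comp_involutory id_comp)
  have "card {p. p permutes {0..<n} \<and> p i = j} = card {q. q permutes ?S}"
    unfolding eq by (rule card_image[OF inj])
  also have "\<dots> = fact (n - 1)"
    by (rule card_permutations) (use assms in auto)
  finally show ?thesis .
qed

lemma card_HS_sum: "card (HS A n p) = (\<Sum>i<n. if A i (p i) = 0 then 1 else (0::nat))"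
proof -
  have "HS A n p = {i\<in>{..<n}. A i (p i) = 0}" by (auto simp: HS_def)
  then show ?thesis by (simp add: sum.If_cases Int_def)
qed

lemma moment:
  assumes rows: "\<forall>i<n. card {j. j < n \<and> A i j = 0} \<le> 2"
  shows "(\<Sum>p\<in>{p. p permutes {0..<n}}. card (HS A n p)) \<le> 2 * fact n"
proof -
  let ?P = "{p. p permutes {0..<n}}"
  have "(\<Sum>p\<in>?P. card (HS A n p)) = (\<Sum>i<n. \<Sum>p\<in>?P. if A i (p i) = 0 then 1 else (0::nat))"
    unfolding card_HS_sum by (rule sum.swap)
  also have "\<dots> \<le> (\<Sum>i<n. 2 * fact (n - 1))"
  proof (rule sum_mono)
    fix i assume i: "i \<in> {..<n}"
    let ?Z = "{j. j < n \<and> A i j = 0}"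
    have "(\<Sum>p\<in>?P. if A i (p i) = 0 then 1 else (0::nat)) = card {p\<in>?P. A i (p i) = 0}"
      by (simp add: sum.If_cases fin_perm Int_def)
    also have "\<dots> = (\<Sum>j\<in>?Z. card {x \<in> {p\<in>?P. A i (p i) = 0}. x i = j})"
    proof -
      have im: "(\<lambda>p. p i) ` {p\<in>?P. A i (p i) = 0} \<subseteq> ?Z"
      proof
        fix x assume "x \<in> (\<lambda>p. p i) ` {p\<in>?P. A i (p i) = 0}"
        then obtain p where "p permutes {0..<n}" "A i (p i) = 0" "x = p i" by auto
        then show "x \<in> ?Z" using i permutes_in_image[of p "{0..<n}" i] by auto
      qed
      have "(\<Sum>j\<in>?Z. \<Sum>x\<in>{x \<in> {p\<in>?P. A i (p i) = 0}. x i = j}. (1::nat)) = (\<Sum>x\<in>{p\<in>?P. A i (p i) = 0}. 1)"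
        by (rule sum.group) (use fin_perm im in auto)
      then show ?thesis by simp
    qed
    also have "\<dots> = (\<Sum>j\<in>?Z. fact (n - 1))"
    proof (rule sum.cong[OF refl])
      fix j assume "j \<in> ?Z"
      then have "{x \<in> {p\<in>?P. A i (p i) = 0}. x i = j} = {p. p permutes {0..<n} \<and> p i = j}" by auto
      then show "card {x \<in> {p\<in>?P. A i (p i) = 0}. x i = j} = fact (n - 1)"
        using card_fix[of i n j] i \<open>j \<in> ?Z\<close> by auto
    qed
    also have "\<dots> = card ?Z * fact (n - 1)" by simp
    also have "\<dots> \<le> 2 * fact (n - 1)" using rows i by (intro mult_right_mono) auto
    finally show "(\<Sum>p\<in>?P. if A i (p i) = 0 then 1 else (0::nat)) \<le> 2 * fact (n - 1)" .
  qed
  also have "\<dots> = 2 * (n * fact (n - 1))" by simp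
  also have "\<dots> \<le> 2 * fact n"
    by (cases n) auto
  finally show ?thesis .
qed

lemma row_pre_card:
  fixes n :: nat and A :: "nat \<Rightarrow> nat \<Rightarrow> real"
  assumes rows: "\<forall>i<n. card {j. j < n \<and> A i j = 0} \<le> 2"
    and p: "p permutes {0..<n}" and i: "i < n"
  shows "card {i'. i' < n \<and> A i (p i') = 0} \<le> 2"
proof -
  have "card {i'. i' < n \<and> A i (p i') = 0} = card (p ` {i'. i' < n \<and> A i (p i') = 0})"
    by (rule card_image[symmetric]) (rule permutes_inj_on[OF p])
  also have "\<dots> \<le> card {j. j < n \<and> A i j = 0}"
  proof (rule card_mono)
    show "finite {j. j < n \<and> A i j = 0}" by (rule finite_subset[of _ "{0..<n}"]) auto
    show "p ` {i'. i' < n \<and> A i (p i') = 0} \<subseteq> {j. j < n \<and> A i j = 0}"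
      using permutes_in_image[OF p] by auto
  qed
  also have "\<dots> \<le> 2" using rows i by auto
  finally show ?thesis .
qed

lemma G_card:
  fixes n :: nat and A :: "nat \<Rightarrow> nat \<Rightarrow> real"
  assumes rows: "\<forall>i<n. card {j. j < n \<and> A i j = 0} \<le> 2"
    and cols: "\<forall>j<n. card {i. i < n \<and> A i j = 0} \<le> 2"
    and p: "p permutes {0..<n}" and hm: "card (HS A n p) = m" and i: "i \<in> HS A n p"
  shows "n - m - 2 \<le> card {i'. i' < n \<and> i' \<notin> HS A n p \<and> A i (p i') \<noteq> 0 \<and> A i' (p i) \<noteq> 0}"
proof -
  let ?NH = "{0..<n} - HS A n p"
  let ?X = "{i'. i' < n \<and> A i (p i') = 0} - {i}"
  let ?Y = "{i'. i' < n \<and> A i' (p i) = 0} - {i}"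
  have i': "i < n" "A i (p i) = 0" using i by (auto simp: HS_def)
  have pi: "p i < n" using permutes_in_image[OF p, of i] i' by auto
  have cNH: "card ?NH = n - m"
    using card_Diff_subset[of "HS A n p" "{0..<n}"] HS_sub[of A n p] finite_subset[OF HS_sub[of A n p]] hm by simp
  have cX: "card ?X \<le> 1"
  proof -
    have "card ?X = card {i'. i' < n \<and> A i (p i') = 0} - 1"
      by (rule card_Diff_singleton) (use i' in auto)
    then show ?thesis using row_pre_card[OF rows p i'(1)] by linarith
  qed
  have cY: "card ?Y \<le> 1"
  proof -
    have "card ?Y = card {i'. i' < n \<and> A i' (p i) = 0} - 1"
      by (rule card_Diff_singleton) (use i' in auto)
    moreover have "card {i'. i' < n \<and> A i' (p i) = 0} \<le> 2" using cols pi by blast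
    ultimately show ?thesis by linarith
  qed
  have cXY: "card (?X \<union> ?Y) \<le> 2"
    using card_Un_le[of ?X ?Y] cX cY by linarith
  have "n - m - 2 \<le> card ?NH - card (?X \<union> ?Y)" using cNH cXY by linarith
  also have "\<dots> \<le> card (?NH - (?X \<union> ?Y))"
    by (rule diff_card_le_card_Diff) auto
  also have "\<dots> \<le> card {i'. i' < n \<and> i' \<notin> HS A n p \<and> A i (p i') \<noteq> 0 \<and> A i' (p i) \<noteq> 0}"
  proof (rule card_mono)
    show "finite {i'. i' < n \<and> i' \<notin> HS A n p \<and> A i (p i') \<noteq> 0 \<and> A i' (p i) \<noteq> 0}"
      by (rule finite_subset[of _ "{0..<n}"]) auto
    show "?NH - (?X \<union> ?Y) \<subseteq> {i'. i' < n \<and> i' \<notin> HS A n p \<and> A i (p i') \<noteq> 0 \<and> A i' (p i) \<noteq> 0}"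
    proof
      fix x assume x: "x \<in> ?NH - (?X \<union> ?Y)"
      then have "x \<noteq> i" using i by auto
      then show "x \<in> {i'. i' < n \<and> i' \<notin> HS A n p \<and> A i (p i') \<noteq> 0 \<and> A i' (p i) \<noteq> 0}"
        using x by auto
    qed
  qed
  finally show ?thesis .
qed

lemma comp_transpose_cancel:
  assumes "p \<circ> Transposition.transpose i j = q \<circ> Transposition.transpose i j"
  shows "p = q"
proof -
  have "p \<circ> Transposition.transpose i j \<circ> Transposition.transpose i j = q \<circ> Transposition.transpose i j \<circ> Transposition.transpose i j"
    using assms by simp
  then show ?thesis by (simp add: comp_assoc)
qed

lemma switching:
  fixes n :: nat and A :: "nat \<Rightarrow> nat \<Rightarrow> real"
  assumes rows: "\<forall>i<n. card {j. j < n \<and> A i j = 0} \<le> 2"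
    and cols: "\<forall>j<n. card {i. i < n \<and> A i j = 0} \<le> 2"
    and m: "1 \<le> m" "m \<le> n"
  shows "NN A n m * (m * (n - m - 2)) \<le> NN A n (m - 1) * (2 * (n - m + 1))"
proof -
  define Sm where "Sm = {p. p permutes {0..<n} \<and> card (HS A n p) = m}"
  define Sm' where "Sm' = {p. p permutes {0..<n} \<and> card (HS A n p) = m - 1}"
  define G where "G p i = {i'. i' < n \<and> i' \<notin> HS A n p \<and> A i (p i') \<noteq> 0 \<and> A i' (p i) \<noteq> 0}" for p i
  define H where "H q i = {i'. i' < n \<and> A i (q i') = 0}" for q :: "nat \<Rightarrow> nat" and i
  define F where "F = (SIGMA p:Sm. SIGMA i:HS A n p. G p i)"
  define B where "B = (SIGMA q:Sm'. SIGMA i:({0..<n} - HS A n q). H q i)"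
  have finSm: "finite Sm" unfolding Sm_def by (rule finite_subset[OF _ fin_perm]) auto
  have finSm': "finite Sm'" unfolding Sm'_def by (rule finite_subset[OF _ fin_perm]) auto
  have finG: "finite (G p i)" for p i unfolding G_def by (rule finite_subset[of _ "{0..<n}"]) auto
  have finH: "finite (H q i)" for q i unfolding H_def by (rule finite_subset[of _ "{0..<n}"]) auto
  have finHS: "finite (HS A n p)" for p by (rule finite_subset[OF HS_sub]) auto
  have finB: "finite B" unfolding B_def using finSm' finH by (intro finite_SigmaI) auto
  have "card F = (\<Sum>p\<in>Sm. card (SIGMA i:HS A n p. G p i))"
    unfolding F_def by (rule card_SigmaI) (use finSm finHS finG in auto)
  also have "\<dots> = (\<Sum>p\<in>Sm. \<Sum>i\<in>HS A n p. card (G p i))"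
    by (rule sum.cong[OF refl], rule card_SigmaI) (use finHS finG in auto)
  finally have cF: "card F = (\<Sum>p\<in>Sm. \<Sum>i\<in>HS A n p. card (G p i))" .
  have "card B = (\<Sum>q\<in>Sm'. card (SIGMA i:({0..<n} - HS A n q). H q i))"
    unfolding B_def by (rule card_SigmaI) (use finSm' finH in auto)
  also have "\<dots> = (\<Sum>q\<in>Sm'. \<Sum>i\<in>{0..<n} - HS A n q. card (H q i))"
    by (rule sum.cong[OF refl], rule card_SigmaI) (use finH in auto)
  finally have cB: "card B = (\<Sum>q\<in>Sm'. \<Sum>i\<in>{0..<n} - HS A n q. card (H q i))" .
  have "NN A n m * (m * (n - m - 2)) = (\<Sum>p\<in>Sm. \<Sum>i\<in>HS A n p. n - m - 2)"
    by (simp add: NN_def Sm_def)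
  also have "\<dots> \<le> card F" unfolding cF
  proof (intro sum_mono)
    fix p i assume p: "p \<in> Sm" and i: "i \<in> HS A n p"
    show "n - m - 2 \<le> card (G p i)" unfolding G_def
      by (rule G_card[OF rows cols]) (use p i in \<open>auto simp: Sm_def\<close>)
  qed
  also have "card F \<le> card B"
  proof (rule card_inj_on_le[where f = "\<lambda>(p, i, i'). (p \<circ> Transposition.transpose i i', i, i')"])
    show "finite B" by (rule finB)
    show "inj_on (\<lambda>(p, i, i'). (p \<circ> Transposition.transpose i i', i, i')) F"
      by (auto simp: inj_on_def dest: comp_transpose_cancel)
    show "(\<lambda>(p, i, i'). (p \<circ> Transposition.transpose i i', i, i')) ` F \<subseteq> B"
    proof clarify
      fix p i i' assume "(p, i, i') \<in> F"
      then have p: "p permutes {0..<n}" "card (HS A n p) = m" and i: "i \<in> HS A n p"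
        and i': "i' < n" "i' \<notin> HS A n p" "A i (p i') \<noteq> 0" "A i' (p i) \<noteq> 0"
        by (auto simp: F_def Sm_def G_def)
      have iin: "i < n" "A i (p i) = 0" using i by (auto simp: HS_def)
      have ne: "i \<noteq> i'" using i i' by auto
      let ?q = "p \<circ> Transposition.transpose i i'"
      have q: "?q permutes {0..<n}"
        by (rule permutes_compose[OF permutes_swap_id p(1)]) (use iin i' in auto)
      have HSq: "HS A n ?q = HS A n p - {i}"
      proof (rule set_eqI)
        fix x show "x \<in> HS A n ?q \<longleftrightarrow> x \<in> HS A n p - {i}"
          using i' ne iin by (cases "x = i"; cases "x = i'") (auto simp: HS_def)
      qed
      have cq: "card (HS A n ?q) = m - 1" using HSq p(2) i finHS by simp
      show "(?q, i, i') \<in> B"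
        unfolding B_def Sm'_def H_def using q cq HSq iin i' ne by auto
    qed
  qed
  also have "card B \<le> (\<Sum>q\<in>Sm'. \<Sum>i\<in>{0..<n} - HS A n q. 2)" unfolding cB
  proof (intro sum_mono)
    fix q i assume q: "q \<in> Sm'" and i: "i \<in> {0..<n} - HS A n q"
    show "card (H q i) \<le> 2" unfolding H_def
      by (rule row_pre_card[OF rows]) (use q i in \<open>auto simp: Sm'_def\<close>)
  qed
  also have "\<dots> = NN A n (m - 1) * (2 * (n - m + 1))"
  proof -
    have "card ({0..<n} - HS A n q) = n - m + 1" if "q \<in> Sm'" for q
      using that card_Diff_subset[of "HS A n q" "{0..<n}"] HS_sub[of A n q] finHS m
      by (auto simp: Sm'_def)
    then show ?thesis by (simp add: NN_def Sm'_def)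
  qed
  finally show ?thesis .
qed

lemma ratio_aux:
  fixes a b k :: real
  assumes "a * k \<le> b * (2 * (k + 3))" "k \<ge> 392" "b \<ge> 0"
  shows "392 * a \<le> 790 * b"
proof -
  have "392 * a * k \<le> 392 * (b * (2 * (k + 3)))" using assms(1) by simp
  also have "\<dots> = 784 * b * k + 2352 * b" by algebra
  also have "\<dots> \<le> 784 * b * k + 6 * b * k"
  proof -
    have "b * 392 \<le> b * k" using mult_left_mono[OF assms(2) assms(3)] .
    then show ?thesis by linarith
  qed
  finally have "(392 * a) * k \<le> (790 * b) * k" by (simp add: algebra_simps)
  then show ?thesis using assms(2) by simp
qed

lemma ratio_step:
  fixes n :: nat and A :: "nat \<Rightarrow> nat \<Rightarrow> real"
  assumes rows: "\<forall>i<n. card {j. j < n \<and> A i j = 0} \<le> 2"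
    and cols: "\<forall>j<n. card {i. i < n \<and> A i j = 0} \<le> 2"
    and m: "1 \<le> m" "m \<le> 6" and n: "n \<ge> 400"
  shows "392 * (real m * real (NN A n m)) \<le> 790 * real (NN A n (m - 1))"
proof -
  have sw: "NN A n m * (m * (n - m - 2)) \<le> NN A n (m - 1) * (2 * (n - m + 1))"
    by (rule switching[OF rows cols]) (use m n in auto)
  have e1: "real (n - m - 2) = real n - m - 2" using m n by simp
  have e2: "real (n - m + 1) = (real n - m - 2) + 3" using m n by simp
  have "real (NN A n m * (m * (n - m - 2))) \<le> real (NN A n (m - 1) * (2 * (n - m + 1)))"
    using sw by (simp only: of_nat_le_iff)
  then have h: "real (NN A n m) * (real m * real (n - m - 2)) \<le> real (NN A n (m - 1)) * (2 * real (n - m + 1))"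
    by (simp only: of_nat_mult of_nat_numeral)
  have eq: "(real m * real (NN A n m)) * (real n - m - 2) = real (NN A n m) * (real m * real (n - m - 2))"
    unfolding e1 by simp
  have "(real m * real (NN A n m)) * (real n - m - 2) \<le> real (NN A n (m - 1)) * (2 * ((real n - m - 2) + 3))"
    using h by (simp only: eq e2)
  then show ?thesis by (rule ratio_aux) (use m n in auto)
qed

lemma final_lin:
  fixes F x0 x1 x2 x3 x4 x5 x6 :: real
  assumes "5 * F \<le> 7 * x0 + 6 * x1 + 5 * x2 + 4 * x3 + 3 * x4 + 2 * x5 + x6"
  "392 * x1 \<le> 790 * x0" "784 * x2 \<le> 790 * x1" "1176 * x3 \<le> 790 * x2"
  "1568 * x4 \<le> 790 * x3" "1960 * x5 \<le> 790 * x4" "2352 * x6 \<le> 790 * x5" "0 < F"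
  shows "F / 7.5 < x0"
proof -
  have a: "2 * x5 + x6 \<le> (2 + 790/2352) * x5" using assms(7) by simp
  have b: "3 * x4 + (2 + 790/2352) * x5 \<le> (3 + (2 + 790/2352) * 790/1960) * x4" using assms(6) by simp
  have c: "4 * x3 + (3 + (2 + 790/2352) * 790/1960) * x4 \<le> (4 + (3 + (2 + 790/2352) * 790/1960) * 790/1568) * x3"
    using assms(5) by simp
  have d: "5 * x2 + (4 + (3 + (2 + 790/2352) * 790/1960) * 790/1568) * x3 \<le> (5 + (4 + (3 + (2 + 790/2352) * 790/1960) * 790/1568) * 790/1176) * x2"
    using assms(4) by simp
  have e: "6 * x1 + (5 + (4 + (3 + (2 + 790/2352) * 790/1960) * 790/1568) * 790/1176) * x2 \<le> (6 + (5 + (4 + (3 + (2 + 790/2352) * 790/1960) * 790/1568) * 790/1176) * 790/784) * x1"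
    using assms(3) by simp
  have f: "7 * x0 + (6 + (5 + (4 + (3 + (2 + 790/2352) * 790/1960) * 790/1568) * 790/1176) * 790/784) * x1 \<le> (7 + (6 + (5 + (4 + (3 + (2 + 790/2352) * 790/1960) * 790/1568) * 790/1176) * 790/784) * 790/392) * x0"
    using assms(2) by simp
  have "5 * F \<le> (7 + (6 + (5 + (4 + (3 + (2 + 790/2352) * 790/1960) * 790/1568) * 790/1176) * 790/784) * 790/392) * x0"
    using assms(1) a b c d e f by linarith
  then show ?thesis using assms(8) by simp
qed

theorem lemma14:
  fixes N :: nat and A :: "nat \<Rightarrow> nat \<Rightarrow> real"
  assumes "N \<ge> 400"
    and "\<forall>i<N. \<forall>j<N. A i j = 0 \<or> A i j = 1"
    and "\<forall>i<N. card {j. j < N \<and> A i j = 1} \<ge> N - 2"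
    and "\<forall>j<N. card {i. i < N \<and> A i j = 1} \<ge> N - 2"
  shows "permanent N A > fact N / 7.5"
proof -
  note N = assms(1) and bin = assms(2)
  let ?P = "{p. p permutes {0..<N}}"
  have rows: "\<forall>i<N. card {j. j < N \<and> A i j = 0} \<le> 2"
  proof (intro allI impI)
    fix i assume i: "i < N"
    have eq: "{j. j < N \<and> A i j = 0} = {0..<N} - {j. j < N \<and> A i j = 1}"
      using bin i by force
    have "card {j. j < N \<and> A i j = 0} = N - card {j. j < N \<and> A i j = 1}"
      unfolding eq by (subst card_Diff_subset) auto
    then show "card {j. j < N \<and> A i j = 0} \<le> 2" using assms(3) i by force
  qed
  have cols: "\<forall>j<N. card {i. i < N \<and> A i j = 0} \<le> 2"
  proof (intro allI impI)
    fix j assume j: "j < N"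
    have eq: "{i. i < N \<and> A i j = 0} = {0..<N} - {i. i < N \<and> A i j = 1}"
      using bin j by force
    have "card {i. i < N \<and> A i j = 0} = N - card {i. i < N \<and> A i j = 1}"
      unfolding eq by (subst card_Diff_subset) auto
    then show "card {i. i < N \<and> A i j = 0} \<le> 2" using assms(4) j by force
  qed
  define x where "x m = real (NN A N m)" for m
  have perm0: "permanent N A = x 0"
  proof -
    have "permanent N A = (\<Sum>p\<in>?P. (\<lambda>m. if m = 0 then 1 else 0) (card (HS A N p)))"
      unfolding permanent_def
    proof (rule sum.cong[OF refl])
      fix p assume "p \<in> ?P"
      then have p: "p permutes {0..<N}" by simp
      have pin: "p i < N" if "i < N" for i using permutes_in_image[OF p, of i] that by simp
      show "(\<Prod>i<N. A i (p i)) = (\<lambda>m. if m = 0 then 1 else 0) (card (HS A N p))"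
      proof (cases "HS A N p = {}")
        case True
        then have "\<forall>i<N. A i (p i) = 1" using bin pin by (force simp: HS_def)
        then have "(\<Prod>i<N. A i (p i)) = 1" by simp
        then show ?thesis using True by simp
      next
        case False
        then obtain i where "i < N" "A i (p i) = 0" by (auto simp: HS_def)
        then have "(\<Prod>i<N. A i (p i)) = 0" by (intro prod_zero) auto
        moreover have "card (HS A N p) \<noteq> 0" using False finite_subset[OF HS_sub] by auto
        ultimately show ?thesis by simp
      qed
    qed
    also have "\<dots> = (\<Sum>m\<le>N. (if m = 0 then 1 else 0) * real (NN A N m))"
      by (rule sum_hits)
    also have "\<dots> = (\<Sum>m\<le>N. if m = 0 then real (NN A N m) else 0)"
      by (rule sum.cong) auto
    also have "\<dots> = x 0" by (simp add: x_def sum.delta)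
    finally show ?thesis .
  qed
  have tot: "(\<Sum>p\<in>?P. real (card (HS A N p))) \<le> 2 * fact N"
  proof -
    have "(\<Sum>p\<in>?P. real (card (HS A N p))) = real (\<Sum>p\<in>?P. card (HS A N p))" by simp
    also have "\<dots> \<le> real (2 * fact N)" using moment[OF rows] by (simp only: of_nat_le_iff)
    finally show ?thesis by simp
  qed
  have cardP: "real (card ?P) = fact N"
    using card_permutations[of "{0..<N}" N] by simp
  define g :: "nat \<Rightarrow> real" where "g m = (if m < 7 then 7 - real m else 0)" for m
  have "5 * fact N \<le> (\<Sum>p\<in>?P. 7 - real (card (HS A N p)))"
    using tot cardP by (simp add: sum_subtractf)
  also have "\<dots> \<le> (\<Sum>p\<in>?P. g (card (HS A N p)))"
    by (rule sum_mono) (simp add: g_def)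
  also have "\<dots> = (\<Sum>m\<le>N. g m * x m)" unfolding x_def by (rule sum_hits)
  also have "\<dots> = (\<Sum>m<7. g m * x m)"
    by (rule sum.mono_neutral_right) (use N in \<open>auto simp: g_def\<close>)
  also have "\<dots> = 7 * x 0 + 6 * x 1 + 5 * x 2 + 4 * x 3 + 3 * x 4 + 2 * x 5 + x 6"
    by (simp add: numeral_eq_Suc lessThan_Suc g_def)
  finally have main: "5 * fact N \<le> 7 * x 0 + 6 * x 1 + 5 * x 2 + 4 * x 3 + 3 * x 4 + 2 * x 5 + x 6" .
  have r: "392 * (real m * x m) \<le> 790 * x (m - 1)" if "1 \<le> m" "m \<le> 6" for m
    unfolding x_def by (rule ratio_step[OF rows cols that N])
  have r1: "392 * x 1 \<le> 790 * x 0" using r[of 1] by simp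
  have r2: "784 * x 2 \<le> 790 * x 1" using r[of 2] by simp
  have r3: "1176 * x 3 \<le> 790 * x 2" using r[of 3] by simp
  have r4: "1568 * x 4 \<le> 790 * x 3" using r[of 4] by simp
  have r5: "1960 * x 5 \<le> 790 * x 4" using r[of 5] by simp
  have r6: "2352 * x 6 \<le> 790 * x 5" using r[of 6] by simp
  have pos: "fact N > (0::real)" by simp
  have "x 0 > fact N / 7.5"
    by (rule final_lin[OF main r1 r2 r3 r4 r5 r6 pos])
  then show ?thesis using perm0 by simp
qed

end
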